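(* A matrix is a slack matrix of a polyhedral cone if and only if it is a slack matrix of some pointed polyhedral cone.
   Context: A matrix $S\in\mathbb{R}^{p\times q}$ is a slack matrix of a polyhedral cone $K\subseteq\mathbb{R}^n$ if there are $A\in\mathbb{R}^{p\times n}$, $B\in\mathbb{R}^{n\times q}$ with $K=\{x\in\mathbb{R}^n: x^TB\ge 0\}=\{y^TA: y\in\mathbb{R}_+^p\}$ and $S=AB$. A cone is pointed if its lineality space (the largest linear subspace it contains) is $\{0\}$. *)

theory Defs
  imports Complex_Main
begin

text \<open>Vectors of R^n are functions nat => real vanishing outside {..<n};
  matrices are functions nat => nat => real, only entries inside the stated
  bounds are relevant.\<close>

definition rvec :: "nat \<Rightarrow> (nat \<Rightarrow> real) set" where
  "rvec n = {x. \<forall>i\<ge>n. x i = 0}"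

definition cone_of_ineqs :: "nat \<Rightarrow> nat \<Rightarrow> (nat \<Rightarrow> nat \<Rightarrow> real) \<Rightarrow> (nat \<Rightarrow> real) set" where
  "cone_of_ineqs n q B = {x \<in> rvec n. \<forall>j<q. (\<Sum>i<n. x i * B i j) \<ge> 0}"

definition cone_of_gens :: "nat \<Rightarrow> nat \<Rightarrow> (nat \<Rightarrow> nat \<Rightarrow> real) \<Rightarrow> (nat \<Rightarrow> real) set" where
  "cone_of_gens p n A = {(\<lambda>j. if j < n then (\<Sum>i<p. y i * A i j) else 0) | y. \<forall>i<p. y i \<ge> 0}"

definition is_slack_matrix_of :: "nat \<Rightarrow> nat \<Rightarrow> nat \<Rightarrow> (nat \<Rightarrow> nat \<Rightarrow> real) \<Rightarrow> (nat \<Rightarrow> real) set \<Rightarrow> bool" where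
  "is_slack_matrix_of p q n S K \<longleftrightarrow>
     (\<exists>A B. K = cone_of_ineqs n q B \<and> K = cone_of_gens p n A \<and>
            (\<forall>i<p. \<forall>j<q. S i j = (\<Sum>k<n. A i k * B k j)))"

definition lin_subspace :: "(nat \<Rightarrow> real) set \<Rightarrow> bool" where
  "lin_subspace L \<longleftrightarrow> (\<lambda>i. 0) \<in> L \<and> (\<forall>x\<in>L. \<forall>y\<in>L. (\<lambda>i. x i + y i) \<in> L)
     \<and> (\<forall>c. \<forall>x\<in>L. (\<lambda>i. c * x i) \<in> L)"

definition pointed :: "(nat \<Rightarrow> real) set \<Rightarrow> bool" where
  "pointed K \<longleftrightarrow> (\<forall>L. lin_subspace L \<and> L \<subseteq> K \<longrightarrow> L = {\<lambda>i. 0})"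

end

theory Submission
  imports Defs
begin

definition sw :: "nat \<Rightarrow> nat \<Rightarrow> nat \<Rightarrow> nat" where
  "sw k m i = (if i = k then m else if i = m then k else i)"

lemma sw_sw[simp]: "sw k m (sw k m i) = i"
  by (simp add: sw_def)

lemma sw_lt: "k < n \<Longrightarrow> m < n \<Longrightarrow> (sw k m i < n) = (i < n)"
  by (auto simp: sw_def)

lemma sum_sw: assumes "k < n" "m < n"
  shows "(\<Sum>i<n. f (sw k m i)) = (\<Sum>i<n. (f i :: real))"
  by (rule sum.reindex_bij_witness[of _ "sw k m" "sw k m"]) (use assms in \<open>auto simp: sw_lt\<close>)

lemma swap_step:
  assumes K1: "cone_of_ineqs n q B = cone_of_gens p n A"
    and sl: "\<forall>i<p. \<forall>j<q. S i j = (\<Sum>k<n. A i k * B k j)"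
    and v: "v \<in> rvec n" "v k \<noteq> 0" "k < n" "\<forall>j<q. (\<Sum>i<n. v i * B i j) = 0"
    and m: "m < n"
  shows "\<exists>A' B' v'. cone_of_ineqs n q B' = cone_of_gens p n A' \<and>
     (\<forall>i<p. \<forall>j<q. S i j = (\<Sum>k<n. A' i k * B' k j)) \<and>
     v' \<in> rvec n \<and> v' m \<noteq> 0 \<and> (\<forall>j<q. (\<Sum>i<n. v' i * B' i j) = 0)"
proof -
  let ?s = "sw k m"
  define B' where "B' i j = B (?s i) j" for i j
  define A' where "A' i j = A i (?s j)" for i j
  define v' where "v' i = v (?s i)" for i
  have ge: "i \<ge> n \<Longrightarrow> ?s i = i" for i using v(3) m by (auto simp: sw_def)
  have sumB: "(\<Sum>i<n. t i * B' i j) = (\<Sum>i<n. (t \<circ> ?s) i * B i j)" for t j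
  proof -
    have "(\<Sum>i<n. t i * B' i j) = (\<Sum>i<n. (\<lambda>i. t (?s i) * B i j) (?s i))"
      by (simp add: B'_def)
    also have "\<dots> = (\<Sum>i<n. t (?s i) * B i j)" by (rule sum_sw[OF v(3) m])
    finally show ?thesis by simp
  qed
  have rv: "t \<in> rvec n \<longleftrightarrow> t \<circ> ?s \<in> rvec n" for t
    using ge by (auto simp: rvec_def)
  have ineq: "t \<in> cone_of_ineqs n q B' \<longleftrightarrow> t \<circ> ?s \<in> cone_of_ineqs n q B" for t
    using rv sumB by (simp add: cone_of_ineqs_def)
  have gens: "t \<in> cone_of_gens p n A' \<longleftrightarrow> t \<circ> ?s \<in> cone_of_gens p n A" for t
  proof
    assume "t \<in> cone_of_gens p n A'"
    then obtain y where y: "\<forall>i<p. y i \<ge> 0" and t: "t = (\<lambda>j. if j < n then (\<Sum>i<p. y i * A' i j) else 0)"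
      by (auto simp: cone_of_gens_def)
    have "t \<circ> ?s = (\<lambda>j. if j < n then (\<Sum>i<p. y i * A i j) else 0)"
      using sw_lt[OF v(3) m] by (auto simp: t A'_def fun_eq_iff)
    then show "t \<circ> ?s \<in> cone_of_gens p n A" using y by (auto simp: cone_of_gens_def)
  next
    assume "t \<circ> ?s \<in> cone_of_gens p n A"
    then obtain y where y: "\<forall>i<p. y i \<ge> 0" and t: "t \<circ> ?s = (\<lambda>j. if j < n then (\<Sum>i<p. y i * A i j) else 0)"
      by (auto simp: cone_of_gens_def)
    have "t = (\<lambda>j. (t \<circ> ?s) (?s j))" by simp
    also have "\<dots> = (\<lambda>j. if j < n then (\<Sum>i<p. y i * A' i j) else 0)"
      using sw_lt[OF v(3) m] by (auto simp: t A'_def fun_eq_iff)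
    finally show "t \<in> cone_of_gens p n A'" using y by (auto simp: cone_of_gens_def)
  qed
  have "cone_of_ineqs n q B' = cone_of_gens p n A'"
    using ineq gens K1 by blast
  moreover have "\<forall>i<p. \<forall>j<q. S i j = (\<Sum>k<n. A' i k * B' k j)"
    using sl sumB[of "A' _"] by (simp add: A'_def comp_def)
  moreover have "v' \<in> rvec n" using v(1) ge by (auto simp: rvec_def v'_def)
  moreover have "v' m \<noteq> 0" using v(2) by (simp add: v'_def sw_def)
  moreover have "\<forall>j<q. (\<Sum>i<n. v' i * B' i j) = 0"
    using v(4) sumB[of v'] by (simp add: v'_def comp_def)
  ultimately show ?thesis by blast
qed

lemma F1:
  fixes B :: "nat \<Rightarrow> nat \<Rightarrow> real"
  assumes "v m \<noteq> 0" "(\<Sum>i<Suc m. v i * B i j) = 0"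
  shows "(\<Sum>i<Suc m. x i * B i j) = (\<Sum>i<m. (x i - x m / v m * v i) * B i j)"
proof -
  have "(\<Sum>i<Suc m. (x i - x m / v m * v i) * B i j)
      = (\<Sum>i<Suc m. x i * B i j) - x m / v m * (\<Sum>i<Suc m. v i * B i j)"
    by (simp add: algebra_simps sum_subtractf sum_distrib_left)
  also have "\<dots> = (\<Sum>i<Suc m. x i * B i j)" using assms(2) by simp
  finally have "(\<Sum>i<Suc m. (x i - x m / v m * v i) * B i j) = (\<Sum>i<Suc m. x i * B i j)" .
  moreover have "(\<Sum>i<Suc m. (x i - x m / v m * v i) * B i j) = (\<Sum>i<m. (x i - x m / v m * v i) * B i j)"
    using assms(1) by simp
  ultimately show ?thesis by simp
qed

lemma trunc_step:
  assumes K1: "cone_of_ineqs (Suc m) q B = cone_of_gens p (Suc m) A"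
    and sl: "\<forall>i<p. \<forall>j<q. S i j = (\<Sum>k<Suc m. A i k * B k j)"
    and v: "v m \<noteq> 0" "\<forall>j<q. (\<Sum>i<Suc m. v i * B i j) = 0"
  shows "\<exists>A' B'. cone_of_ineqs m q B' = cone_of_gens p m A' \<and>
     (\<forall>i<p. \<forall>j<q. S i j = (\<Sum>k<m. A' i k * B' k j))"
proof -
  define A' where "A' i j = A i j - A i m / v m * v j" for i j
  have sub: "cone_of_ineqs m q B \<subseteq> cone_of_gens p m A'"
  proof
    fix t assume t: "t \<in> cone_of_ineqs m q B"
    then have trv: "t \<in> rvec m" by (simp add: cone_of_ineqs_def)
    then have "t \<in> rvec (Suc m)" by (simp add: rvec_def)
    moreover have "\<forall>j<q. (\<Sum>i<Suc m. t i * B i j) \<ge> 0"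
      using t trv by (simp add: cone_of_ineqs_def rvec_def)
    ultimately have "t \<in> cone_of_ineqs (Suc m) q B" by (simp only: cone_of_ineqs_def mem_Collect_eq)
    then have "t \<in> cone_of_gens p (Suc m) A" using K1 by simp
    then obtain y where y: "\<forall>i<p. y i \<ge> 0" and tt: "t = (\<lambda>j. if j < Suc m then (\<Sum>i<p. y i * A i j) else 0)"
      by (auto simp: cone_of_gens_def)
    have tm: "(\<Sum>i<p. y i * A i m) = 0" using trv tt by (simp add: rvec_def) (metis lessI order_refl)
    have "t = (\<lambda>j. if j < m then (\<Sum>i<p. y i * A' i j) else 0)"
    proof
      fix j show "t j = (if j < m then (\<Sum>i<p. y i * A' i j) else 0)"
      proof (cases "j < m")
        case True
        have "(\<Sum>i<p. y i * A' i j) = (\<Sum>i<p. y i * A i j) - (\<Sum>i<p. y i * A i m) / v m * v j"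
          by (simp add: A'_def algebra_simps sum_subtractf sum_distrib_left sum_divide_distrib)
        then show ?thesis using True tm tt by simp
      next
        case False then show ?thesis using trv by (simp add: rvec_def)
      qed
    qed
    then show "t \<in> cone_of_gens p m A'" using y by (auto simp: cone_of_gens_def)
  qed
  have sup: "cone_of_gens p m A' \<subseteq> cone_of_ineqs m q B"
  proof
    fix z assume "z \<in> cone_of_gens p m A'"
    then obtain y where y: "\<forall>i<p. y i \<ge> 0" and zz: "z = (\<lambda>j. if j < m then (\<Sum>i<p. y i * A' i j) else 0)"
      by (auto simp: cone_of_gens_def)
    define x where "x = (\<lambda>j. if j < Suc m then (\<Sum>i<p. y i * A i j) else (0::real))"
    have "x \<in> cone_of_gens p (Suc m) A" using y by (auto simp: cone_of_gens_def x_def)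
    then have xK: "x \<in> cone_of_ineqs (Suc m) q B" using K1 by simp
    have zx: "z i = x i - x m / v m * v i" if "i < m" for i
    proof -
      have "(\<Sum>k<p. y k * A' k i) = (\<Sum>k<p. y k * A k i) - (\<Sum>k<p. y k * A k m) / v m * v i"
        by (simp add: A'_def algebra_simps sum_subtractf sum_distrib_left sum_divide_distrib)
      then show ?thesis using that by (simp add: zz x_def)
    qed
    have "z \<in> rvec m" by (simp add: zz rvec_def)
    moreover have "(\<Sum>i<m. z i * B i j) \<ge> 0" if "j < q" for j
    proof -
      have "(\<Sum>i<m. z i * B i j) = (\<Sum>i<m. (x i - x m / v m * v i) * B i j)"
        using zx by simp
      also have "\<dots> = (\<Sum>i<Suc m. x i * B i j)" using F1[of v m, OF v(1)] v(2) that by simp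
      also have "\<dots> \<ge> 0" using xK that by (simp add: cone_of_ineqs_def)
      finally show ?thesis .
    qed
    ultimately show "z \<in> cone_of_ineqs m q B" by (simp add: cone_of_ineqs_def)
  qed
  have "\<forall>i<p. \<forall>j<q. S i j = (\<Sum>k<m. A' i k * B k j)"
    using sl F1[of v m, OF v(1)] v(2) by (simp add: A'_def)
  then show ?thesis using sub sup by blast
qed


lemma reduce:
  assumes "is_slack_matrix_of p q n S K" "\<not> pointed K"
  shows "\<exists>n'<n. \<exists>K'. is_slack_matrix_of p q n' S K'"
proof -
  obtain A B where KB: "K = cone_of_ineqs n q B" and KA: "K = cone_of_gens p n A"
    and sl: "\<forall>i<p. \<forall>j<q. S i j = (\<Sum>k<n. A i k * B k j)"
    using assms(1) by (auto simp: is_slack_matrix_of_def)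
  obtain L where L: "lin_subspace L" "L \<subseteq> K" "L \<noteq> {\<lambda>i. 0}"
    using assms(2) by (auto simp: pointed_def)
  have "(\<lambda>i. 0) \<in> L" using L(1) by (simp add: lin_subspace_def)
  then obtain v where vL: "v \<in> L" "v \<noteq> (\<lambda>i. 0)" using L(3) by blast
  have nv: "(\<lambda>i. -1 * v i) \<in> L" using L(1) vL(1) unfolding lin_subspace_def by blast
  have vK: "v \<in> cone_of_ineqs n q B" using vL L(2) KB by auto
  have nvK: "(\<lambda>i. -1 * v i) \<in> cone_of_ineqs n q B" using nv L(2) KB by auto
  have v0: "\<forall>j<q. (\<Sum>i<n. v i * B i j) = 0"
  proof (intro allI impI)
    fix j assume j: "j < q"
    have a: "(\<Sum>i<n. v i * B i j) \<ge> 0" using vK j by (simp add: cone_of_ineqs_def)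
    have "(\<Sum>i<n. -1 * v i * B i j) \<ge> 0" using nvK j by (simp add: cone_of_ineqs_def)
    then have "- (\<Sum>i<n. v i * B i j) \<ge> 0" by (simp add: sum_negf)
    with a show "(\<Sum>i<n. v i * B i j) = 0" by simp
  qed
  have vr: "v \<in> rvec n" using vK by (simp add: cone_of_ineqs_def)
  obtain k where k: "v k \<noteq> 0" using vL(2) by auto
  have kn: "k < n" using vr k by (simp add: rvec_def) (meson not_le)
  then obtain m where n: "n = Suc m" by (cases n) auto
  have "cone_of_ineqs n q B = cone_of_gens p n A" using KA KB by simp
  from swap_step[OF this sl vr k kn v0, of m] n
  obtain A' B' v' where "cone_of_ineqs (Suc m) q B' = cone_of_gens p (Suc m) A'"
     "\<forall>i<p. \<forall>j<q. S i j = (\<Sum>k<Suc m. A' i k * B' k j)"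
     "v' m \<noteq> 0" "\<forall>j<q. (\<Sum>i<Suc m. v' i * B' i j) = 0" by auto
  from trunc_step[OF this] obtain A'' B'' where
    "cone_of_ineqs m q B'' = cone_of_gens p m A''"
    "\<forall>i<p. \<forall>j<q. S i j = (\<Sum>k<m. A'' i k * B'' k j)" by blast
  then have "is_slack_matrix_of p q m S (cone_of_ineqs m q B'')"
    unfolding is_slack_matrix_of_def by blast
  then show ?thesis using n by blast
qed

theorem lemma2p10:
  fixes p q :: nat and S :: "nat \<Rightarrow> nat \<Rightarrow> real"
  shows "(\<exists>n K. is_slack_matrix_of p q n S K) \<longleftrightarrow>
         (\<exists>n K. is_slack_matrix_of p q n S K \<and> pointed K)"
proof
  assume "\<exists>n K. is_slack_matrix_of p q n S K"
  then obtain n K where h: "is_slack_matrix_of p q n S K" by blast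
  have "\<forall>K. is_slack_matrix_of p q n S K \<longrightarrow> (\<exists>n K. is_slack_matrix_of p q n S K \<and> pointed K)"
  proof (induction n rule: less_induct)
    case (less n)
    show ?case
    proof (intro allI impI)
      fix K assume K: "is_slack_matrix_of p q n S K"
      show "\<exists>n K. is_slack_matrix_of p q n S K \<and> pointed K"
      proof (cases "pointed K")
        case True then show ?thesis using K by blast
      next
        case False
        from reduce[OF K False] obtain n' K' where "n' < n" "is_slack_matrix_of p q n' S K'" by blast
        then show ?thesis using less by blast
      qed
    qed
  qed
  then show "\<exists>n K. is_slack_matrix_of p q n S K \<and> pointed K" using h by blast
qed blast

end
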